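(* Let $n\ge1$. Let $H_1,H_2$ be two edge-disjoint Hamilton cycles of $G_{n,3}$ and $E_1,E_2$ two edge-disjoint directed Hamilton cycles of $Q_{2n}$ (starting at $\mathbf 0$). Then the four Hamilton cycles $g(E_1,H_1)$, $g(E_1,H_2)$, $g(E_2,H_1)$, $g(E_2,H_2)$ of $Q_{6n}$ are pairwise edge-disjoint.
   Context: $Q_{2n}$ is realized as the graph on quaternary strings $q_1\cdots q_n$, $q_i\in\{0,1,2,3\}$, adjacent iff they differ in exactly one position and there by $\pm1\pmod4$; $\mathbf 0=0\cdots0$. $G_{n,3}=C_{4^n}\Box C_{4^n}\Box C_{4^n}$ has vertex set $(\mathbb Z/4^n\mathbb Z)^3$, adjacency: differ in exactly one coordinate, by $\pm1\pmod{4^n}$. For a directed Hamilton cycle $E$ of $Q_{2n}$ listing vertices $e_0=\mathbf 0,e_1,\dots,e_{4^n-1}$, put $\pi_E(e_p)=p$. Identify $V(Q_{6n})$ with triples $(u,w,t)$ of quaternary strings of length $n$ (digits $1..n$, $n+1..2n$, $2n+1..3n$), so $Q_{6n}=Q_{2n}\Box Q_{2n}\Box Q_{2n}$, and let $\Psi_E(u,w,t)=(\pi_E(u),\pi_E(w),\pi_E(t))$; $\Psi_E^{-1}$ maps edges of $G_{n,3}$ to edges of $Q_{6n}$. For a Hamilton cycle $H$ of $G_{n,3}$, $g(E,H):=\Psi_E^{-1}(H)$, a Hamilton cycle of $Q_{6n}$. *)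

theory Defs
  imports Main
begin

(* Vertices of Q_{2n}: quaternary strings of length n, as lists over {0,1,2,3}. *)
definition quat_strings :: "nat \<Rightarrow> nat list set" where
  "quat_strings n = {xs. length xs = n \<and> (\<forall>x\<in>set xs. x < 4)}"

definition Q_adj :: "nat \<Rightarrow> nat list \<Rightarrow> nat list \<Rightarrow> bool" where
  "Q_adj n u v \<longleftrightarrow> u \<in> quat_strings n \<and> v \<in> quat_strings n \<and>
     (\<exists>i<n. (\<forall>j<n. j \<noteq> i \<longrightarrow> u ! j = v ! j) \<and>
            ((u ! i + 1) mod 4 = v ! i \<or> (v ! i + 1) mod 4 = u ! i))"

definition zero_str :: "nat \<Rightarrow> nat list" where
  "zero_str n = replicate n 0"

(* Vertices of G_{n,3} = C_{4^n} x C_{4^n} x C_{4^n}: triples in (Z/4^n Z)^3 *)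
definition G_verts :: "nat \<Rightarrow> (nat \<times> nat \<times> nat) set" where
  "G_verts n = {..<4^n} \<times> {..<4^n} \<times> {..<4^n}"

definition cyc_adj :: "nat \<Rightarrow> nat \<Rightarrow> nat \<Rightarrow> bool" where
  "cyc_adj m x y \<longleftrightarrow> (x + 1) mod m = y \<or> (y + 1) mod m = x"

definition G_adj :: "nat \<Rightarrow> nat \<times> nat \<times> nat \<Rightarrow> nat \<times> nat \<times> nat \<Rightarrow> bool" where
  "G_adj n p q \<longleftrightarrow> p \<in> G_verts n \<and> q \<in> G_verts n \<and>
     (case p of (a, b, c) \<Rightarrow> case q of (a', b', c') \<Rightarrow>
        (cyc_adj (4^n) a a' \<and> b = b' \<and> c = c') \<or>
        (a = a' \<and> cyc_adj (4^n) b b' \<and> c = c') \<or>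
        (a = a' \<and> b = b' \<and> cyc_adj (4^n) c c'))"

definition ham_cycle :: "'a set \<Rightarrow> ('a \<Rightarrow> 'a \<Rightarrow> bool) \<Rightarrow> 'a list \<Rightarrow> bool" where
  "ham_cycle V adj vs \<longleftrightarrow> distinct vs \<and> set vs = V \<and> 3 \<le> length vs \<and>
     (\<forall>i<length vs. adj (vs ! i) (vs ! (Suc i mod length vs)))"

definition cyc_edges :: "'a list \<Rightarrow> 'a set set" where
  "cyc_edges vs = {{vs ! i, vs ! (Suc i mod length vs)} | i. i < length vs}"

definition edge_disjoint :: "'a list \<Rightarrow> 'a list \<Rightarrow> bool" where
  "edge_disjoint xs ys \<longleftrightarrow> cyc_edges xs \<inter> cyc_edges ys = {}"

definition dir_ham_cycle_Q :: "nat \<Rightarrow> nat list list \<Rightarrow> bool" where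
  "dir_ham_cycle_Q n e \<longleftrightarrow> ham_cycle (quat_strings n) (Q_adj n) e \<and> e ! 0 = zero_str n"

definition pi_E :: "nat list list \<Rightarrow> nat list \<Rightarrow> nat" where
  "pi_E e v = (THE p. p < length e \<and> e ! p = v)"

definition Psi_E :: "nat \<Rightarrow> nat list list \<Rightarrow> nat list \<Rightarrow> nat \<times> nat \<times> nat" where
  "Psi_E n e s = (pi_E e (take n s), pi_E e (take n (drop n s)), pi_E e (drop (2*n) s))"

definition Psi_E_inv :: "nat \<Rightarrow> nat list list \<Rightarrow> nat \<times> nat \<times> nat \<Rightarrow> nat list" where
  "Psi_E_inv n e = inv_into (quat_strings (3*n)) (Psi_E n e)"

definition g_map :: "nat \<Rightarrow> nat list list \<Rightarrow> (nat \<times> nat \<times> nat) list \<Rightarrow> nat list list" where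
  "g_map n e H = map (Psi_E_inv n e) H"

end

theory Submission
  imports Defs
begin

lemma card_quat: "card (quat_strings n) = 4^n"
proof -
  have "quat_strings n = {xs. set xs \<subseteq> {..<4::nat} \<and> length xs = n}"
    unfolding quat_strings_def by auto
  thus ?thesis by (simp add: card_lists_length_eq)
qed

lemma dhc_props:
  assumes "dir_ham_cycle_Q n e"
  shows "distinct e" "set e = quat_strings n" "length e = 4^n" "3 \<le> length e"
  using assms unfolding dir_ham_cycle_Q_def ham_cycle_def
  by (auto simp: card_quat[symmetric] distinct_card[symmetric])

lemma pi_E_idx: "distinct e \<Longrightarrow> p < length e \<Longrightarrow> pi_E e (e ! p) = p"
  unfolding pi_E_def
  by (rule the_equality) (auto simp: nth_eq_iff_index_eq)

lemma pi_E_nth: "distinct e \<Longrightarrow> v \<in> set e \<Longrightarrow> e ! (pi_E e v) = v"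
  by (metis in_set_conv_nth pi_E_idx)

definition T3 :: "nat list list \<Rightarrow> nat \<times> nat \<times> nat \<Rightarrow> nat list \<times> nat list \<times> nat list" where
  "T3 e p = (case p of (a,b,c) \<Rightarrow> (e!a, e!b, e!c))"

definition cat3 :: "nat list \<times> nat list \<times> nat list \<Rightarrow> nat list" where
  "cat3 t = (case t of (u,v,w) \<Rightarrow> u @ v @ w)"

lemma quat_len: "x \<in> quat_strings n \<Longrightarrow> length x = n"
  by (simp add: quat_strings_def)

lemma T3_quat:
  assumes "dir_ham_cycle_Q n e" "p \<in> G_verts n"
  shows "fst (T3 e p) \<in> quat_strings n \<and> fst (snd (T3 e p)) \<in> quat_strings n \<and> snd (snd (T3 e p)) \<in> quat_strings n"
  using assms dhc_props[OF assms(1)] unfolding T3_def G_verts_def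
  by (auto split: prod.splits)

lemma cat3_quat:
  assumes "dir_ham_cycle_Q n e" "p \<in> G_verts n"
  shows "cat3 (T3 e p) \<in> quat_strings (3*n)"
  using T3_quat[OF assms] unfolding cat3_def quat_strings_def
  by (auto split: prod.splits)

lemma Psi_cat3:
  assumes "dir_ham_cycle_Q n e" "p \<in> G_verts n"
  shows "Psi_E n e (cat3 (T3 e p)) = p"
proof -
  obtain a b c where p: "p = (a,b,c)" by (cases p) auto
  have ab: "a < 4^n" "b < 4^n" "c < 4^n" using assms(2) p by (auto simp: G_verts_def)
  note d = dhc_props[OF assms(1)]
  have l: "length (e!a) = n" "length (e!b) = n" "length (e!c) = n"
    using T3_quat[OF assms] p by (auto simp: T3_def quat_len)
  show ?thesis using ab d l p
    by (simp add: Psi_E_def cat3_def T3_def pi_E_idx mult_2)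
qed

lemma Psi_inj:
  assumes "dir_ham_cycle_Q n e"
  shows "inj_on (Psi_E n e) (quat_strings (3*n))"
proof
  fix s t assume s: "s \<in> quat_strings (3*n)" and t: "t \<in> quat_strings (3*n)"
    and eq: "Psi_E n e s = Psi_E n e t"
  note d = dhc_props[OF assms]
  have blk: "take n x \<in> set e \<and> take n (drop n x) \<in> set e \<and> drop (2*n) x \<in> set e"
    if "x \<in> quat_strings (3*n)" for x
    using that d(2) set_take_subset[of n x] set_drop_subset[of n x]
      set_take_subset[of n "drop n x"] set_drop_subset[of "2*n" x]
    unfolding quat_strings_def by auto
  have eqs: "pi_E e (take n s) = pi_E e (take n t)"
    "pi_E e (take n (drop n s)) = pi_E e (take n (drop n t))"
    "pi_E e (drop (2*n) s) = pi_E e (drop (2*n) t)"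
    using eq by (simp_all add: Psi_E_def)
  have e1a: "e ! pi_E e (take n s) = take n s" using pi_E_nth[OF d(1)] blk[OF s] by blast
  have e1b: "e ! pi_E e (take n t) = take n t" using pi_E_nth[OF d(1)] blk[OF t] by blast
  have e1: "take n s = take n t" using e1a e1b eqs(1) by argo
  have e2a: "e ! pi_E e (take n (drop n s)) = take n (drop n s)" using pi_E_nth[OF d(1)] blk[OF s] by blast
  have e2b: "e ! pi_E e (take n (drop n t)) = take n (drop n t)" using pi_E_nth[OF d(1)] blk[OF t] by blast
  have e2: "take n (drop n s) = take n (drop n t)" using e2a e2b eqs(2) by argo
  have e3a: "e ! pi_E e (drop (2*n) s) = drop (2*n) s" using pi_E_nth[OF d(1)] blk[OF s] by blast
  have e3b: "e ! pi_E e (drop (2*n) t) = drop (2*n) t" using pi_E_nth[OF d(1)] blk[OF t] by blast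
  have e3: "drop (2*n) s = drop (2*n) t" using e3a e3b eqs(3) by argo
  have split: "x = take n x @ take n (drop n x) @ drop (2*n) x" for x :: "nat list"
  proof -
    have 1: "drop (2*n) x = drop n (drop n x)" by (simp add: mult_2)
    have 2: "x = take n x @ drop n x" by (rule append_take_drop_id[symmetric])
    have 3: "drop n x = take n (drop n x) @ drop n (drop n x)" by (rule append_take_drop_id[symmetric])
    show ?thesis using 1 2 3 by argo
  qed
  show "s = t" using split[of s] split[of t] e1 e2 e3 by argo
qed

lemma Psi_inv_eq:
  assumes "dir_ham_cycle_Q n e" "p \<in> G_verts n"
  shows "Psi_E_inv n e p = cat3 (T3 e p)"
  unfolding Psi_E_inv_def
  by (rule inv_into_f_eq[OF Psi_inj[OF assms(1)] cat3_quat[OF assms] Psi_cat3[OF assms]])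

lemma g_map_eq:
  assumes "dir_ham_cycle_Q n e" "ham_cycle (G_verts n) (G_adj n) H"
  shows "g_map n e H = map (\<lambda>p. cat3 (T3 e p)) H"
  unfolding g_map_def using assms Psi_inv_eq
  by (auto simp: ham_cycle_def intro!: map_cong)

lemma edges_g:
  assumes "dir_ham_cycle_Q n e" "ham_cycle (G_verts n) (G_adj n) H"
    "X \<in> cyc_edges (g_map n e H)"
  shows "\<exists>p q. X = {cat3 (T3 e p), cat3 (T3 e q)} \<and> {p,q} \<in> cyc_edges H \<and> G_adj n p q"
proof -
  from assms(3) obtain i where i: "i < length H"
    "X = {g_map n e H ! i, g_map n e H ! (Suc i mod length H)}"
    unfolding cyc_edges_def g_map_def by auto
  have pos: "Suc i mod length H < length H" using i(1) by (intro mod_less_divisor) auto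
  show ?thesis
    apply (rule exI[of _ "H!i"], rule exI[of _ "H ! (Suc i mod length H)"])
    using i pos assms(2) unfolding g_map_eq[OF assms(1,2)]
    by (auto simp: cyc_edges_def ham_cycle_def)
qed

lemma G_adj_verts: "G_adj n p q \<Longrightarrow> p \<in> G_verts n \<and> q \<in> G_verts n"
  by (simp add: G_adj_def)

lemma cat3_inj:
  assumes "dir_ham_cycle_Q n e" "p \<in> G_verts n" "q \<in> G_verts n"
   "cat3 (T3 e p) = cat3 (T3 e q)"
  shows "T3 e p = T3 e q"
  using T3_quat[OF assms(1,2)] T3_quat[OF assms(1,3)] assms(4)
  by (auto simp: cat3_def quat_len split: prod.splits)

lemma f_inj:
  assumes "dir_ham_cycle_Q n e"
  shows "inj_on (\<lambda>p. cat3 (T3 e p)) (G_verts n)"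
proof
  fix p q assume pq: "p \<in> G_verts n" "q \<in> G_verts n" "cat3 (T3 e p) = cat3 (T3 e q)"
  hence t: "T3 e p = T3 e q" using cat3_inj assms by blast
  note d = dhc_props[OF assms]
  show "p = q" using t pq(1,2) d
    by (auto simp: T3_def G_verts_def nth_eq_iff_index_eq split: prod.splits)
qed

definition edgeT :: "nat list list \<Rightarrow> nat list \<times> nat list \<times> nat list \<Rightarrow> nat list \<times> nat list \<times> nat list \<Rightarrow> bool" where
  "edgeT e x y \<longleftrightarrow> (case x of (u1,u2,u3) \<Rightarrow> case y of (v1,v2,v3) \<Rightarrow>
     ({u1,v1} \<in> cyc_edges e \<and> u1 \<noteq> v1 \<and> u2 = v2 \<and> u3 = v3) \<or>
     ({u2,v2} \<in> cyc_edges e \<and> u1 = v1 \<and> u2 \<noteq> v2 \<and> u3 = v3) \<or>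
     ({u3,v3} \<in> cyc_edges e \<and> u1 = v1 \<and> u2 = v2 \<and> u3 \<noteq> v3))"

lemma cyc_step:
  assumes "dir_ham_cycle_Q n e" "cyc_adj (4^n) a a'" "a < 4^n" "a' < 4^n"
  shows "{e!a, e!a'} \<in> cyc_edges e \<and> e!a \<noteq> e!a'"
proof -
  note d = dhc_props[OF assms(1)]
  have nf: "(x + 1) mod length e \<noteq> x" if "x < length e" for x
  proof (cases "x + 1 < length e")
    case True thus ?thesis by simp
  next
    case False
    hence "x + 1 = length e" using that by simp
    thus ?thesis using d(4) by simp
  qed
  have "a \<noteq> a'" using assms(2,3,4) d(3) nf unfolding cyc_adj_def by metis
  hence ne: "e!a \<noteq> e!a'" using d assms by (simp add: nth_eq_iff_index_eq)
  have "{e!a, e!a'} \<in> cyc_edges e" using assms(2,3,4) d(3) unfolding cyc_adj_def cyc_edges_def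
    by (auto simp: insert_commute)
  thus ?thesis using ne by simp
qed

lemma G_edgeT:
  assumes "dir_ham_cycle_Q n e" "G_adj n p q"
  shows "edgeT e (T3 e p) (T3 e q)"
  using assms(2) cyc_step[OF assms(1)]
  unfolding G_adj_def edgeT_def T3_def G_verts_def
  by (auto split: prod.splits)

lemma edgeT_disj:
  assumes "edgeT e1 x y" "edgeT e2 x' y'" "{x,y} = {x',y'}" "edge_disjoint e1 e2"
  shows False
  using assms unfolding edgeT_def edge_disjoint_def doubleton_eq_iff
  by (auto split: prod.splits simp: insert_commute)

lemma same_E:
  assumes "dir_ham_cycle_Q n e" "ham_cycle (G_verts n) (G_adj n) H1"
    "ham_cycle (G_verts n) (G_adj n) H2" "edge_disjoint H1 H2"
  shows "edge_disjoint (g_map n e H1) (g_map n e H2)"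
  unfolding edge_disjoint_def
proof (rule ccontr)
  assume "cyc_edges (g_map n e H1) \<inter> cyc_edges (g_map n e H2) \<noteq> {}"
  then obtain X where X: "X \<in> cyc_edges (g_map n e H1)" "X \<in> cyc_edges (g_map n e H2)" by blast
  obtain p q where pq: "X = {cat3 (T3 e p), cat3 (T3 e q)}" "{p,q} \<in> cyc_edges H1" "G_adj n p q"
    using edges_g[OF assms(1,2) X(1)] by blast
  obtain p' q' where pq': "X = {cat3 (T3 e p'), cat3 (T3 e q')}" "{p',q'} \<in> cyc_edges H2" "G_adj n p' q'"
    using edges_g[OF assms(1,3) X(2)] by blast
  have v: "p \<in> G_verts n" "q \<in> G_verts n" "p' \<in> G_verts n" "q' \<in> G_verts n"
    using G_adj_verts pq(3) pq'(3) by auto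
  have "cat3 (T3 e p) = cat3 (T3 e p') \<and> cat3 (T3 e q) = cat3 (T3 e q') \<or>
        cat3 (T3 e p) = cat3 (T3 e q') \<and> cat3 (T3 e q) = cat3 (T3 e p')"
    using doubleton_eq_iff[of "cat3 (T3 e p)" "cat3 (T3 e q)" "cat3 (T3 e p')" "cat3 (T3 e q')"] pq(1) pq'(1) by argo
  hence "p = p' \<and> q = q' \<or> p = q' \<and> q = p'"
    using inj_onD[OF f_inj[OF assms(1)]] v by blast
  hence "{p,q} = {p',q'}" by auto
  thus False using pq(2) pq'(2) assms(4) unfolding edge_disjoint_def by auto
qed

lemma diff_E:
  assumes "dir_ham_cycle_Q n e1" "dir_ham_cycle_Q n e2" "edge_disjoint e1 e2"
    "ham_cycle (G_verts n) (G_adj n) H1" "ham_cycle (G_verts n) (G_adj n) H2"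
  shows "edge_disjoint (g_map n e1 H1) (g_map n e2 H2)"
  unfolding edge_disjoint_def
proof (rule ccontr)
  assume "cyc_edges (g_map n e1 H1) \<inter> cyc_edges (g_map n e2 H2) \<noteq> {}"
  then obtain X where X: "X \<in> cyc_edges (g_map n e1 H1)" "X \<in> cyc_edges (g_map n e2 H2)" by blast
  obtain p q where pq: "X = {cat3 (T3 e1 p), cat3 (T3 e1 q)}" "G_adj n p q"
    using edges_g[OF assms(1,4) X(1)] by blast
  obtain p' q' where pq': "X = {cat3 (T3 e2 p'), cat3 (T3 e2 q')}" "G_adj n p' q'"
    using edges_g[OF assms(2,5) X(2)] by blast
  have v: "p \<in> G_verts n" "q \<in> G_verts n" "p' \<in> G_verts n" "q' \<in> G_verts n"
    using G_adj_verts pq(2) pq'(2) by auto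
  have inj: "cat3 (T3 a s) = cat3 (T3 b t) \<Longrightarrow> T3 a s = T3 b t"
    if "dir_ham_cycle_Q n a" "dir_ham_cycle_Q n b" "s \<in> G_verts n" "t \<in> G_verts n" for a b s t
    using T3_quat[OF that(1,3)] T3_quat[OF that(2,4)]
    by (auto simp: cat3_def quat_len split: prod.splits)
  have "cat3 (T3 e1 p) = cat3 (T3 e2 p') \<and> cat3 (T3 e1 q) = cat3 (T3 e2 q') \<or>
        cat3 (T3 e1 p) = cat3 (T3 e2 q') \<and> cat3 (T3 e1 q) = cat3 (T3 e2 p')"
    using doubleton_eq_iff[of "cat3 (T3 e1 p)" "cat3 (T3 e1 q)" "cat3 (T3 e2 p')" "cat3 (T3 e2 q')"] pq(1) pq'(1) by argo
  hence "T3 e1 p = T3 e2 p' \<and> T3 e1 q = T3 e2 q' \<or> T3 e1 p = T3 e2 q' \<and> T3 e1 q = T3 e2 p'"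
    using inj[OF assms(1,2)] v by blast
  hence "{T3 e1 p, T3 e1 q} = {T3 e2 p', T3 e2 q'}" by auto
  thus False using edgeT_disj[OF G_edgeT[OF assms(1) pq(2)] G_edgeT[OF assms(2) pq'(2)] _ assms(3)]
    by blast
qed

theorem lemma5:
  fixes n :: nat and H1 H2 :: "(nat \<times> nat \<times> nat) list" and E1 E2 :: "nat list list"
  assumes "n \<ge> 1"
    and "ham_cycle (G_verts n) (G_adj n) H1" and "ham_cycle (G_verts n) (G_adj n) H2"
    and "edge_disjoint H1 H2"
    and "dir_ham_cycle_Q n E1" and "dir_ham_cycle_Q n E2"
    and "edge_disjoint E1 E2"
  shows "edge_disjoint (g_map n E1 H1) (g_map n E1 H2) \<and>
         edge_disjoint (g_map n E1 H1) (g_map n E2 H1) \<and>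
         edge_disjoint (g_map n E1 H1) (g_map n E2 H2) \<and>
         edge_disjoint (g_map n E1 H2) (g_map n E2 H1) \<and>
         edge_disjoint (g_map n E1 H2) (g_map n E2 H2) \<and>
         edge_disjoint (g_map n E2 H1) (g_map n E2 H2)"
  using same_E[OF assms(5,2,3,4)] same_E[OF assms(6,2,3,4)]
    diff_E[OF assms(5,6,7) assms(2) assms(2)] diff_E[OF assms(5,6,7) assms(2) assms(3)]
    diff_E[OF assms(5,6,7) assms(3) assms(2)] diff_E[OF assms(5,6,7) assms(3) assms(3)]
  by blast

end
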